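(* Let $a\in\mathbb{Z}\setminus\{0\}$ and let $f(X)=X(X+a)$. Then the system \[ f(x)+f(y)=f(p),\quad f(y)+f(z)=f(q),\quad f(z)+f(x)=f(r) \] has infinitely many solutions $(x,y,z,p,q,r)$ in positive integers. *)

theory Defs
  imports Main
begin

definition fq :: "int \<Rightarrow> int \<Rightarrow> int" where
  "fq a X = X * (X + a)"

end

theory Submission
  imports Defs
begin

fun sq :: "nat \<Rightarrow> int \<times> int" where
  "sq 0 = (2, 3)"
| "sq (Suc n) = (3 * fst (sq n) + 2 * snd (sq n) + 2, 4 * fst (sq n) + 3 * snd (sq n) + 3)"

lemma sq_props: "fst (sq n) > 0 \<and> snd (sq n) > 0 \<and> even (fst (sq n)) \<and>
   2 * (fst (sq n) * (fst (sq n) + 1)) = snd (sq n) * (snd (sq n) + 1)"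
proof (induction n)
  case 0 then show ?case by simp
next
  case (Suc n)
  obtain y q where e: "sq n = (y, q)" by (cases "sq n")
  from Suc e have h: "y > 0" "q > 0" "even y" "2 * (y * (y + 1)) = q * (q + 1)" by auto
  have "2 * ((3*y+2*q+2) * ((3*y+2*q+2) + 1)) = (4*y+3*q+3) * ((4*y+3*q+3) + 1)"
    using h(4) by (simp add: algebra_simps)
  then show ?case using h e by simp
qed

lemma sq_mono: "fst (sq n) < fst (sq (Suc n))"
  using sq_props[of n] by simp

lemma sq_smono: "strict_mono (\<lambda>n. fst (sq n))"
  unfolding strict_mono_Suc_iff using sq_mono by blast

definition mm :: "int \<Rightarrow> int \<Rightarrow> int" where
  "mm a X = (if a > 0 then a * X else - a * (X + 1))"

lemma fq_mm: "fq a (mm a X) = a^2 * (X * (X + 1))"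
  unfolding fq_def mm_def power2_eq_square by (simp add: algebra_simps)

lemma mm_pos: "a \<noteq> 0 \<Longrightarrow> X > 0 \<Longrightarrow> mm a X > 0"
  unfolding mm_def by (auto simp: mult_neg_pos)

lemma mm_inj: "a \<noteq> 0 \<Longrightarrow> mm a X = mm a Y \<Longrightarrow> X = Y"
  unfolding mm_def by (auto split: if_splits)

theorem mainTheorem2:
  fixes a :: int
  assumes "a \<noteq> 0"
  shows "infinite {(x::int, y::int, z::int, p::int, q::int, r::int).
                    x > 0 \<and> y > 0 \<and> z > 0 \<and> p > 0 \<and> q > 0 \<and> r > 0 \<and>
                    fq a x + fq a y = fq a p \<and>
                    fq a y + fq a z = fq a q \<and>
                    fq a z + fq a x = fq a r}"
proof -
  define Y where "Y n = fst (sq n)" for n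
  define Q where "Q n = snd (sq n)" for n
  define W where "W n = Y n div 2" for n
  define X where "X n = (2 * W n - 1) * (W n + 1)" for n
  define g where "g n = (mm a (X n), mm a (Y n), mm a (Y n), mm a (X n + 1), mm a (Q n), mm a (X n + 1))" for n
  have inj: "inj g"
  proof (rule injI)
    fix m n assume "g m = g n"
    then have "mm a (Y m) = mm a (Y n)" unfolding g_def by simp
    then have "Y m = Y n" using mm_inj assms by blast
    then show "m = n" using strict_mono_eq[OF sq_smono] unfolding Y_def by blast
  qed
  have sub: "range g \<subseteq> {(x::int, y::int, z::int, p::int, q::int, r::int).
                    x > 0 \<and> y > 0 \<and> z > 0 \<and> p > 0 \<and> q > 0 \<and> r > 0 \<and>
                    fq a x + fq a y = fq a p \<and>
                    fq a y + fq a z = fq a q \<and>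
                    fq a z + fq a x = fq a r}"
  proof (rule image_subsetI)
    fix n
    have P: "Y n > 0" "Q n > 0" "even (Y n)" "2 * (Y n * (Y n + 1)) = Q n * (Q n + 1)"
      using sq_props[of n] unfolding Y_def Q_def by auto
    have YW: "Y n = 2 * W n" using P(3) unfolding W_def by simp
    have W1: "W n \<ge> 1" using P(1) YW by simp
    have Xp: "X n > 0" unfolding X_def using W1 by simp
    have E1: "X n * (X n + 1) + Y n * (Y n + 1) = (X n + 1) * (X n + 1 + 1)"
      unfolding X_def YW by (simp add: algebra_simps)
    have E2: "Y n * (Y n + 1) + Y n * (Y n + 1) = Q n * (Q n + 1)" using P(4) by simp
    have F1: "fq a (mm a (X n)) + fq a (mm a (Y n)) = fq a (mm a (X n + 1))"
      unfolding fq_mm using E1 by (metis distrib_left)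
    have F2: "fq a (mm a (Y n)) + fq a (mm a (Y n)) = fq a (mm a (Q n))"
      unfolding fq_mm using E2 by (metis distrib_left)
    show "g n \<in> {(x::int, y::int, z::int, p::int, q::int, r::int).
                    x > 0 \<and> y > 0 \<and> z > 0 \<and> p > 0 \<and> q > 0 \<and> r > 0 \<and>
                    fq a x + fq a y = fq a p \<and>
                    fq a y + fq a z = fq a q \<and>
                    fq a z + fq a x = fq a r}"
      unfolding g_def using F1 F2 mm_pos[OF assms] Xp P(1,2)
      by (simp add: add.commute)
  qed
  show ?thesis unfolding infinite_iff_countable_subset using inj sub by blast
qed

end
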